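(* Let $m\ge2$ and consider the single-family model. Let $q_m'$ be the probability that an individual of type $m$ is born at some time, but that eventually all individuals in the population have type $0$. If $N\mu^{1-2^{-(m-1)}}\to0$ as $N\to\infty$, then $q_m'\ll1/N$, i.e. $Nq_m'\to0$.
   Context: Single-family model: a population of $N$ individuals with types in $\{0,1,2,\dots\}$, with mutation rate $\mu=\mu(N)>0$. Initially one individual has type $1$ and the other $N-1$ have type $0$. Each individual independently lives for an exponentially distributed time with mean $1$, and is then replaced by a new individual whose parent is chosen uniformly at random from the $N$ individuals (including the one being replaced), inheriting the parent's type. Each individual of type $k\ge1$ experiences mutations at the times of a rate-$\mu$ Poisson process, each changing its type from $k$ to $k+1$; type $0$ individuals never mutate. Limits are as $N\to\infty$. *)

theory Defs
  imports "HOL-Probability.Probability"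
begin

text \<open>The population is a list of N types (individual i has type xs ! i).
The continuous-time chain has total event rate N + mu * k, where k is the number of individuals
of type at least 1: each individual dies at rate 1 (and is replaced by a copy of a uniformly chosen
parent, possibly itself), each individual of type at least 1 mutates at rate mu.
We record the embedded jump chain (including deaths that do not change the configuration);
the event considered depends only on the sequence of visited configurations.\<close>

definition death_step :: "nat \<Rightarrow> nat list \<Rightarrow> nat list pmf" where
  "death_step N xs =
     bind_pmf (pmf_of_set {..<N}) (\<lambda>i.
     bind_pmf (pmf_of_set {..<N}) (\<lambda>j.
     return_pmf (xs[i := xs ! j])))"

definition mut_step :: "nat list \<Rightarrow> nat list pmf" where
  "mut_step xs =
     map_pmf (\<lambda>i. xs[i := Suc (xs ! i)]) (pmf_of_set {i. i < length xs \<and> xs ! i \<ge> 1})"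

definition sf_step :: "nat \<Rightarrow> real \<Rightarrow> nat list \<Rightarrow> nat list pmf" where
  "sf_step N \<mu> xs =
     (let k = card {i. i < length xs \<and> xs ! i \<ge> 1} in
      if k = 0 then death_step N xs
      else bind_pmf (bernoulli_pmf (real N / (real N + \<mu> * real k)))
             (\<lambda>b. if b then death_step N xs else mut_step xs))"

fun sf_path :: "nat \<Rightarrow> real \<Rightarrow> nat \<Rightarrow> nat list \<Rightarrow> nat list list pmf" where
  "sf_path N \<mu> 0 xs = return_pmf [xs]"
| "sf_path N \<mu> (Suc n) xs =
     bind_pmf (sf_step N \<mu> xs) (\<lambda>ys. map_pmf (Cons xs) (sf_path N \<mu> n ys))"

definition sf_init :: "nat \<Rightarrow> nat list" where
  "sf_init N = 1 # replicate (N - 1) 0"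

text \<open>Paths in which some individual of type m has existed and the final configuration is all type 0
(all-type-0 is absorbing, so this is an increasing family of events in the horizon n).\<close>
definition sf_event :: "nat \<Rightarrow> nat list list set" where
  "sf_event m = {ps. (\<exists>xs\<in>set ps. m \<in> set xs) \<and> (\<forall>t\<in>set (last ps). t = 0)}"

definition q_prime :: "nat \<Rightarrow> nat \<Rightarrow> real \<Rightarrow> real" where
  "q_prime m N \<mu> = (SUP n. measure_pmf.prob (sf_path N \<mu> n (sf_init N)) (sf_event m))"

end

theory Submission
  imports Defs
begin


lemma integral_bind_pmf':
  fixes f :: "'b \<Rightarrow> real"
  assumes "\<And>x. \<bar>f x\<bar> \<le> B"
  shows "integral\<^sup>L (bind_pmf M N) f = (\<integral>x. integral\<^sup>L (N x) f \<partial>M)"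
  unfolding measure_pmf_bind
  apply (rule integral_bind[where K="count_space UNIV" and B=B and B'=1])
  using assms by (auto simp: space_subprob_algebra measure_pmf.emeasure_space_1
     intro!: prob_space_imp_subprob_space measure_pmf.prob_space_axioms)

lemma measure_bind_pmf':
  "measure (measure_pmf (bind_pmf M N)) X = (\<integral>x. measure (measure_pmf (N x)) X \<partial>M)"
proof -
  have "measure (measure_pmf (bind_pmf M N)) X = integral\<^sup>L (bind_pmf M N) (indicator X)"
    by simp
  also have "\<dots> = (\<integral>x. integral\<^sup>L (N x) (indicator X) \<partial>M)"
    by (rule integral_bind_pmf'[where B=1]) (auto simp: indicator_def)
  finally show ?thesis by simp
qed

definition cnt :: "nat \<Rightarrow> nat list \<Rightarrow> nat" where
  "cnt t xs = card {i. i < length xs \<and> t \<le> xs ! i}"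

lemma integral_death:
  fixes f :: "nat list \<Rightarrow> real"
  assumes "N \<ge> 1" "\<And>x. \<bar>f x\<bar> \<le> B"
  shows "integral\<^sup>L (death_step N xs) f = (\<Sum>i<N. \<Sum>j<N. f (xs[i := xs ! j])) / (real N)^2"
proof -
  have ne: "{..<N} \<noteq> {}" using assms by (simp add: lessThan_empty_iff)
  have "integral\<^sup>L (death_step N xs) f = (\<integral>i. (\<integral>j. f (xs[i := xs ! j]) \<partial>pmf_of_set {..<N}) \<partial>pmf_of_set {..<N})"
    unfolding death_step_def
    apply (subst integral_bind_pmf'[where B=B])
    using assms apply simp
    apply (subst integral_bind_pmf'[where B=B])
    using assms apply simp
    using ne by simp
  also have "\<dots> = (\<Sum>i<N. \<Sum>j<N. f (xs[i := xs ! j])) / (real N)^2"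
    using assms by (simp add: integral_pmf_of_set power2_eq_square sum_divide_distrib lessThan_empty_iff)
  finally show ?thesis .
qed

lemma integral_mut:
  fixes f :: "nat list \<Rightarrow> real"
  assumes "cnt 1 xs \<ge> 1"
  shows "integral\<^sup>L (mut_step xs) f = (\<Sum>i\<in>{i. i < length xs \<and> 1 \<le> xs ! i}. f (xs[i := Suc (xs ! i)])) / real (cnt 1 xs)"
proof -
  have ne: "{i. i < length xs \<and> 1 \<le> xs ! i} \<noteq> {}" using assms unfolding cnt_def by (metis card.empty not_one_le_zero)
  show ?thesis unfolding mut_step_def using ne by (simp add: integral_pmf_of_set cnt_def)
qed

lemma integral_step:
  fixes f :: "nat list \<Rightarrow> real"
  assumes "N \<ge> 1" "\<And>x. \<bar>f x\<bar> \<le> B" "\<mu> > 0"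
  shows "integral\<^sup>L (sf_step N \<mu> xs) f =
    (if cnt 1 xs = 0 then (\<Sum>i<N. \<Sum>j<N. f (xs[i := xs ! j])) / (real N)^2
     else (real N / (real N + \<mu> * cnt 1 xs)) * ((\<Sum>i<N. \<Sum>j<N. f (xs[i := xs ! j])) / (real N)^2)
        + (1 - real N / (real N + \<mu> * cnt 1 xs)) *
          ((\<Sum>i\<in>{i. i < length xs \<and> 1 \<le> xs ! i}. f (xs[i := Suc (xs ! i)])) / real (cnt 1 xs)))"
proof (cases "cnt 1 xs = 0")
  case True
  then show ?thesis unfolding sf_step_def using integral_death[OF assms(1,2)]
    by (simp add: cnt_def[symmetric])
next
  case False
  have p: "0 \<le> real N / (real N + \<mu> * cnt 1 xs)" "real N / (real N + \<mu> * cnt 1 xs) \<le> 1"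
    using assms by (auto simp: divide_le_eq_1)
  show ?thesis unfolding sf_step_def Let_def cnt_def[symmetric] using False
    apply simp
    apply (subst integral_bind_pmf'[where B=B])
    using assms apply (auto split: if_splits)[1]
    using p integral_death[OF assms(1,2)] integral_mut[of xs f] by (simp add: algebra_simps)
qed

lemma path_Suc_measure:
  "measure (sf_path N \<mu> (Suc n) xs) E = (\<integral>ys. measure (sf_path N \<mu> n ys) (Cons xs -` E) \<partial>sf_step N \<mu> xs)"
  by (simp add: measure_bind_pmf')

lemma path_nonempty: "[] \<notin> set_pmf (sf_path N \<mu> n xs)"
  by (cases n) auto

lemma cnt_update:
  assumes "i < length xs"
  shows "cnt t (xs[i:=v]) = (if t \<le> xs!i then (if t \<le> v then cnt t xs else cnt t xs - 1)
                             else (if t \<le> v then cnt t xs + 1 else cnt t xs))"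
proof -
  define S where "S = {l. l < length xs \<and> t \<le> xs!l}"
  have fin: "finite S" unfolding S_def by simp
  have eq: "{l. l < length (xs[i:=v]) \<and> t \<le> xs[i:=v]!l} = (S - {i}) \<union> (if t \<le> v then {i} else {})"
    using assms unfolding S_def by (auto simp: nth_list_update)
  have c: "cnt t (xs[i:=v]) = card ((S - {i}) \<union> (if t \<le> v then {i} else {}))"
    unfolding cnt_def eq ..
  have c0: "cnt t xs = card S" unfolding cnt_def S_def ..
  show ?thesis
  proof (cases "t \<le> xs!i")
    case True
    then have iS: "i \<in> S" using assms unfolding S_def by simp
    have "card (S - {i}) = card S - 1" using iS fin by (simp add: card_Diff_singleton)
    moreover have "card (S - {i} \<union> {i}) = card S" using iS by (metis Un_insert_right insert_Diff sup_bot.right_neutral)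
    ultimately show ?thesis unfolding c c0 using True by simp
  next
    case False
    then have iS: "i \<notin> S" using assms unfolding S_def by simp
    then have "card (S - {i} \<union> {i}) = card S + 1" using fin by simp
    then show ?thesis unfolding c c0 using False iS by simp
  qed
qed

lemma cnt_le: "cnt t xs \<le> length xs"
proof -
  have "{i. i < length xs \<and> t \<le> xs ! i} \<subseteq> {..<length xs}" by auto
  then have "card {i. i < length xs \<and> t \<le> xs ! i} \<le> card {..<length xs}"
    by (intro card_mono) auto
  then show ?thesis unfolding cnt_def by simp
qed

lemma sum_bool_split:
  fixes h :: "bool \<Rightarrow> real"
  assumes "finite A"
  shows "(\<Sum>j\<in>A. h (P j)) = real (card {j\<in>A. P j}) * h True + real (card {j\<in>A. \<not> P j}) * h False"
proof -
  have "(\<Sum>j\<in>A. h (P j)) = (\<Sum>j\<in>A. if P j then h True else h False)"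
    by (rule sum.cong) auto
  also have "\<dots> = (\<Sum>j\<in>{j\<in>A. P j}. h True) + (\<Sum>j\<in>{j\<in>A. \<not> P j}. h False)"
    using assms by (simp add: sum.If_cases Int_def)
  finally show ?thesis by simp
qed

lemma card_split_lt:
  assumes "length xs = N"
  shows "card {j\<in>{..<N}. t \<le> xs!j} = cnt t xs" "card {j\<in>{..<N}. \<not> t \<le> xs!j} = N - cnt t xs"
proof -
  show 1: "card {j\<in>{..<N}. t \<le> xs!j} = cnt t xs" unfolding cnt_def using assms
    by (intro arg_cong[where f=card]) auto
  have u: "{j\<in>{..<N}. t \<le> xs!j} \<union> {j\<in>{..<N}. \<not> t \<le> xs!j} = {..<N}" by auto
  have "card {j\<in>{..<N}. t \<le> xs!j} + card {j\<in>{..<N}. \<not> t \<le> xs!j} = card {..<N}"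
    by (subst card_Un_disjoint[symmetric]) (auto simp only: u intro: finite_subset[of _ "{..<N}"])
  then show "card {j\<in>{..<N}. \<not> t \<le> xs!j} = N - cnt t xs" using 1 by simp
qed

lemma death_sum:
  fixes g :: "nat \<Rightarrow> real"
  assumes "length xs = N"
  shows "(\<Sum>i<N. \<Sum>j<N. g (cnt t (xs[i := xs!j]))) =
     (real (cnt t xs)^2 + real (N - cnt t xs)^2) * g (cnt t xs)
     + real (cnt t xs) * real (N - cnt t xs) * (g (cnt t xs - 1) + g (cnt t xs + 1))"
proof -
  define y where "y = cnt t xs"
  define P where "P = (\<lambda>l. t \<le> xs!l)"
  define h where "h = (\<lambda>a b. g (if a then (if b then y else y - 1) else (if b then y + 1 else y)))"
  have c1: "card {j\<in>{..<N}. P j} = y" "card {j\<in>{..<N}. \<not> P j} = N - y"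
    using card_split_lt[OF assms] unfolding P_def y_def by auto
  have "(\<Sum>i<N. \<Sum>j<N. g (cnt t (xs[i := xs!j]))) = (\<Sum>i<N. \<Sum>j<N. h (P i) (P j))"
    unfolding h_def P_def y_def using assms by (intro sum.cong refl) (simp add: cnt_update)
  also have "\<dots> = (\<Sum>i<N. real y * h (P i) True + real (N - y) * h (P i) False)"
  proof (intro sum.cong refl)
    fix i
    show "(\<Sum>j<N. h (P i) (P j)) = real y * h (P i) True + real (N - y) * h (P i) False"
      using sum_bool_split[of "{..<N}" "h (P i)" P] c1 by simp
  qed
  also have "\<dots> = real y * (real y * h True True + real (N - y) * h True False)
      + real (N - y) * (real y * h False True + real (N - y) * h False False)"
    using sum_bool_split[of "{..<N}" "\<lambda>a. real y * h a True + real (N - y) * h a False" P] c1 by simp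
  also have "\<dots> = (real y^2 + real (N - y)^2) * g y + real y * real (N - y) * (g (y - 1) + g (y + 1))"
    unfolding h_def by (simp add: power2_eq_square distrib_left distrib_right)
  finally show ?thesis unfolding y_def .
qed

lemma cnt_mut:
  assumes "i < length xs"
  shows "cnt t (xs[i:=Suc (xs!i)]) = cnt t xs + (if t = Suc (xs!i) then 1 else 0)"
  using assms by (auto simp: cnt_update)


definition Hs :: "nat \<Rightarrow> nat \<Rightarrow> real" where
  "Hs N j = (\<Sum>k\<in>{1..j}. 1 / (real N - real k))"
definition Fs :: "nat \<Rightarrow> nat \<Rightarrow> real" where
  "Fs N y = (\<Sum>k\<in>{1..<y}. (real y - real k) / (real N - real k))"

lemma Hs_0[simp]: "Hs N 0 = 0" by (simp add: Hs_def)
lemma Fs_0[simp]: "Fs N 0 = 0" by (simp add: Fs_def)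

lemma Hs_Suc: "Hs N (Suc j) = Hs N j + 1 / (real N - real (Suc j))"
  unfolding Hs_def by (simp add: add.commute)

lemma Fs_Suc: "Fs N (Suc y) = Fs N y + Hs N y"
proof -
  have "Fs N (Suc y) = (\<Sum>k\<in>{1..y}. (real y - real k) / (real N - real k) + 1 / (real N - real k))"
    unfolding Fs_def by (intro sum.cong) (auto simp: atLeastLessThanSuc_atLeastAtMost add_divide_distrib[symmetric])
  also have "\<dots> = (\<Sum>k\<in>{1..y}. (real y - real k) / (real N - real k)) + Hs N y"
    by (simp add: sum.distrib Hs_def)
  also have "(\<Sum>k\<in>{1..y}. (real y - real k) / (real N - real k)) = Fs N y"
  proof (cases y)
    case 0 then show ?thesis by (simp add: Fs_def)
  next
    case (Suc z)
    have "{1..y} = insert y {1..<y}" using Suc by auto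
    then show ?thesis unfolding Fs_def by simp
  qed
  finally show ?thesis .
qed

lemma Hs_nonneg: "j < N \<Longrightarrow> 0 \<le> Hs N j"
  unfolding Hs_def by (intro sum_nonneg) auto

lemma Fs_le: "y \<le> N \<Longrightarrow> Fs N y \<le> real y"
proof -
  assume y: "y \<le> N"
  have "Fs N y \<le> (\<Sum>k\<in>{1..<y}. 1)"
    unfolding Fs_def by (intro sum_mono) (use y in auto)
  also have "\<dots> \<le> real y" by simp
  finally show ?thesis .
qed

definition Yc :: "nat \<Rightarrow> real \<Rightarrow> nat" where
  "Yc N d = (if d * (real N)^2 \<le> 4 then N else nat \<lceil>1 / sqrt d\<rceil>)"

definition ff :: "nat \<Rightarrow> real \<Rightarrow> nat \<Rightarrow> real" where
  "ff N d y = 4 * sqrt d * real y - d * real N * Fs N y"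

definition fA :: "nat \<Rightarrow> real \<Rightarrow> nat \<Rightarrow> real" where
  "fA N d y = min 1 (ff N d (min y (Yc N d)))"

lemma ff_Suc: "ff N d (Suc y) = ff N d y + 4 * sqrt d - d * real N * Hs N y"
  unfolding ff_def Fs_Suc by (simp add: algebra_simps)

lemma ff_delta2:
  assumes "1 \<le> y"
  shows "ff N d (y+1) + ff N d (y-1) - 2 * ff N d y = - d * real N / (real N - real y)"
proof -
  obtain z where z: "y = Suc z" using assms by (cases y) auto
  show ?thesis unfolding z using ff_Suc[of N d "Suc z"] ff_Suc[of N d z] Hs_Suc[of N z]
    by (simp add: algebra_simps)
qed

lemma Yc_props:
  assumes N: "N \<ge> 2" and d: "0 < d" "d \<le> 1/4"
  shows "Yc N d \<le> N" "1 \<le> Yc N d"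
    and "\<And>y. y \<le> Yc N d \<Longrightarrow> 0 \<le> ff N d y"
    and "Yc N d < N \<Longrightarrow> 1 \<le> ff N d (Yc N d)"
proof -
  have sd: "0 < sqrt d" "sqrt d \<le> 1/2"
  proof -
    show "0 < sqrt d" using d by simp
    have "sqrt d \<le> sqrt ((1/2)^2)" using d by (intro real_sqrt_le_mono) (simp add: power2_eq_square)
    then show "sqrt d \<le> 1/2" by simp
  qed
  have sdd: "sqrt d * sqrt d = d" using d by simp
  have "Yc N d \<le> N \<and> 1 \<le> Yc N d \<and> (\<forall>y. y \<le> Yc N d \<longrightarrow> 0 \<le> ff N d y) \<and> (Yc N d < N \<longrightarrow> 1 \<le> ff N d (Yc N d))"
  proof (cases "d * (real N)^2 \<le> 4")
    case True
    then have Y: "Yc N d = N" by (simp add: Yc_def)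
    have "(sqrt d * real N)^2 \<le> 2^2" using True d by (simp add: power_mult_distrib)
    then have sN: "sqrt d * real N \<le> 2" by (rule power2_le_imp_le) simp
    have dN: "d * real N \<le> 2 * sqrt d"
    proof -
      have "d * real N = sqrt d * (sqrt d * real N)" using sdd by (simp add: mult.assoc[symmetric])
      also have "\<dots> \<le> sqrt d * 2" using sN sd by (intro mult_left_mono) auto
      finally show ?thesis by simp
    qed
    have "0 \<le> ff N d y" if "y \<le> N" for y
    proof -
      have "d * real N * Fs N y \<le> d * real N * real y"
        using Fs_le[OF that] d by (intro mult_left_mono) auto
      also have "\<dots> \<le> 2 * sqrt d * real y" using dN by (intro mult_right_mono) auto
      moreover have "0 \<le> sqrt d * real y" using sd by simp
      ultimately show ?thesis unfolding ff_def by linarith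
    qed
    then show ?thesis using Y N by auto
  next
    case False
    then have Y: "Yc N d = nat \<lceil>1 / sqrt d\<rceil>" by (simp add: Yc_def)
    have isd: "2 \<le> 1 / sqrt d" using sd by (simp add: field_simps)
    have Yr: "1 / sqrt d \<le> real (Yc N d)" "real (Yc N d) < 1 / sqrt d + 1"
      unfolding Y using isd by linarith+
    have "2^2 < (sqrt d * real N)^2" using False d by (simp add: power_mult_distrib)
    then have sN: "2 < sqrt d * real N" by (rule power_less_imp_less_base) (use sd in simp)
    have half: "1 / sqrt d < real N / 2" using sN sd by (simp add: field_simps)
    have YN: "Yc N d \<le> N" using Yr half N by linarith
    have Y1: "1 \<le> Yc N d" using Yr isd by linarith
    have Hb: "d * real N * Hs N y \<le> 2 * d * real y" if "y < Yc N d" for y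
    proof -
      have "Hs N y \<le> (\<Sum>k\<in>{1..y}. 2 / real N)"
        unfolding Hs_def
      proof (intro sum_mono)
        fix k assume k: "k \<in> {1..y}"
        then have "real k < real N / 2" using that Yr half by auto
        then show "1 / (real N - real k) \<le> 2 / real N" using N by (simp add: field_simps)
      qed
      also have "\<dots> = 2 * real y / real N" by simp
      finally have "Hs N y \<le> 2 * real y / real N" .
      then have "d * real N * Hs N y \<le> d * real N * (2 * real y / real N)"
        using d by (intro mult_left_mono) auto
      then show ?thesis using N by (simp add: field_simps)
    qed
    have Fb: "y \<le> Yc N d \<longrightarrow> d * real N * Fs N y \<le> d * (real y)^2" for y
    proof (induction y)
      case 0 then show ?case by simp
    next
      case (Suc y)
      show ?case
      proof
        assume "Suc y \<le> Yc N d"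
        then have "d * real N * Fs N y \<le> d * (real y)^2" "d * real N * Hs N y \<le> 2 * d * real y"
          using Suc Hb by auto
        then show "d * real N * Fs N (Suc y) \<le> d * (real (Suc y))^2"
        proof -
          have e1: "d * real N * Fs N (Suc y) = d * real N * Fs N y + d * real N * Hs N y"
            by (simp add: Fs_Suc algebra_simps)
          have e2: "d * (real (Suc y))^2 = d * (real y)^2 + 2 * d * real y + d"
            by (simp add: algebra_simps power2_eq_square)
          show ?thesis using e1 e2 d \<open>d * real N * Fs N y \<le> d * (real y)^2\<close>
            \<open>d * real N * Hs N y \<le> 2 * d * real y\<close> by linarith
        qed
      qed
    qed
    have ffb: "sqrt d * real y * (4 - sqrt d * real y) \<le> ff N d y" if "y \<le> Yc N d" for y
      using Fb[of y] that sdd unfolding ff_def by (simp add: algebra_simps power2_eq_square)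
    have xb: "sqrt d * real y \<le> 3/2" if "y \<le> Yc N d" for y
    proof -
      have "sqrt d * real y \<le> sqrt d * real (Yc N d)" using that sd by (intro mult_left_mono) auto
      also have "\<dots> < sqrt d * (1 / sqrt d + 1)" using Yr sd by (intro mult_strict_left_mono) auto
      also have "\<dots> = 1 + sqrt d" using sd by (simp add: field_simps)
      finally show ?thesis using sd by linarith
    qed
    have "0 \<le> ff N d y" if "y \<le> Yc N d" for y
    proof -
      have "0 \<le> sqrt d * real y * (4 - sqrt d * real y)"
        using xb[OF that] sd by (intro mult_nonneg_nonneg) auto
      then show ?thesis using ffb[OF that] by linarith
    qed
    moreover have "1 \<le> ff N d (Yc N d)"
    proof -
      have x1: "1 \<le> sqrt d * real (Yc N d)" using Yr sd by (simp add: field_simps)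
      have x2: "sqrt d * real (Yc N d) \<le> 3/2" using xb by simp
      have "1 \<le> sqrt d * real (Yc N d) * (4 - sqrt d * real (Yc N d))"
      proof -
        have "1 * (4 - sqrt d * real (Yc N d)) \<le> sqrt d * real (Yc N d) * (4 - sqrt d * real (Yc N d))"
          using x1 x2 by (intro mult_right_mono) auto
        then have "4 - sqrt d * real (Yc N d) \<le> sqrt d * real (Yc N d) * (4 - sqrt d * real (Yc N d))"
          by simp
        then show ?thesis using x2 by linarith
      qed
      then show ?thesis using ffb[of "Yc N d"] by simp
    qed
    ultimately show ?thesis using YN Y1 by auto
  qed
  then show "Yc N d \<le> N" "1 \<le> Yc N d" "\<And>y. y \<le> Yc N d \<Longrightarrow> 0 \<le> ff N d y"
    "Yc N d < N \<Longrightarrow> 1 \<le> ff N d (Yc N d)" by auto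
qed


lemma ff_0[simp]: "ff N d 0 = 0" by (simp add: ff_def)

lemma fA_0[simp]: "fA N d 0 = 0" by (simp add: fA_def)

lemma fA_nonneg:
  assumes "N \<ge> 2" "0 < d" "d \<le> 1/4"
  shows "0 \<le> fA N d y"
  using Yc_props(3)[OF assms, of "min y (Yc N d)"] unfolding fA_def by simp

lemma fA_le1: "fA N d y \<le> 1" by (simp add: fA_def)

lemma fA_inc:
  assumes "N \<ge> 2" "0 < d" "d \<le> 1/4"
  shows "fA N d (Suc y) \<le> fA N d y + 4 * sqrt d"
proof (cases "y < Yc N d")
  case True
  then have m: "min (Suc y) (Yc N d) = Suc y" "min y (Yc N d) = y" by auto
  have "0 \<le> Hs N y" using Yc_props(1)[OF assms] True by (intro Hs_nonneg) auto
  moreover have "0 \<le> d * real N" using assms by simp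
  ultimately have "0 \<le> d * real N * Hs N y" by (rule mult_nonneg_nonneg[rotated])
  then have "ff N d (Suc y) \<le> ff N d y + 4 * sqrt d"
    unfolding ff_Suc by simp
  moreover have "0 \<le> sqrt d" using assms by simp
  moreover have "min 1 a \<le> min 1 b + c" if "a \<le> b + c" "0 \<le> c" for a b c :: real
    using that unfolding min_def by (auto split: if_splits)
  ultimately show ?thesis unfolding fA_def m by simp
next
  case False
  then have "min (Suc y) (Yc N d) = min y (Yc N d)" by auto
  then show ?thesis unfolding fA_def using assms by simp
qed

lemma fA_delta2:
  assumes "N \<ge> 2" "0 < d" "d \<le> 1/4" "1 \<le> y" "y < N" "fA N d y < 1"
  shows "fA N d (y+1) + fA N d (y-1) - 2 * fA N d y \<le> - d * real N / (real N - real y)"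
proof -
  have yY: "y < Yc N d"
  proof (rule ccontr)
    assume "\<not> y < Yc N d"
    then have "min y (Yc N d) = Yc N d" by auto
    moreover have "Yc N d < N" using \<open>\<not> y < Yc N d\<close> assms by auto
    ultimately have "fA N d y = 1" unfolding fA_def using Yc_props(4)[OF assms(1-3)] by simp
    then show False using assms by simp
  qed
  have e0: "fA N d y = ff N d y" using yY assms(6) unfolding fA_def by (simp add: min_def split: if_splits)
  have e1: "fA N d (y+1) \<le> ff N d (y+1)" using yY unfolding fA_def by (simp add: min_def)
  have "min (y-1) (Yc N d) = y - 1" using yY by simp
  then have e2: "fA N d (y-1) \<le> ff N d (y-1)" unfolding fA_def by simp
  show ?thesis using e0 e1 e2 ff_delta2[OF assms(4), of N d] by linarith
qed

lemma fA_level: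
  assumes "N \<ge> 2" "0 < d" "d \<le> 1/4" "y < N" "fA N d y < 1" "d = \<mu> * c'" "\<mu> > 0"
  shows "real y * (real N - real y) * (fA N d (y+1) + fA N d (y-1) - 2 * fA N d y)
         + real N * \<mu> * real y * c' \<le> 0"
proof (cases "y = 0")
  case True then show ?thesis by simp
next
  case False
  have D: "fA N d (y+1) + fA N d (y-1) - 2 * fA N d y \<le> - d * real N / (real N - real y)"
    using fA_delta2[OF assms(1-3) _ assms(4,5)] False by simp
  have pos: "0 \<le> real y * (real N - real y)" using assms by simp
  have "real y * (real N - real y) * (fA N d (y+1) + fA N d (y-1) - 2 * fA N d y)
      \<le> real y * (real N - real y) * (- d * real N / (real N - real y))"
    by (rule mult_left_mono[OF D pos])
  also have "\<dots> = - real N * \<mu> * real y * c'" using assms by (simp add: field_simps)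
  finally show ?thesis by simp
qed

definition Bf :: "real \<Rightarrow> nat \<Rightarrow> real" where
  "Bf s y = 1 - (1 - s)^y"

lemma Bf_0[simp]: "Bf s 0 = 0" by (simp add: Bf_def)

lemma Bf_nonneg: "0 \<le> s \<Longrightarrow> s \<le> 1 \<Longrightarrow> 0 \<le> Bf s y"
  unfolding Bf_def by (simp add: power_le_one)

lemma Bf_inc: "0 \<le> s \<Longrightarrow> s \<le> 1 \<Longrightarrow> Bf s (Suc y) \<le> Bf s y + s"
proof -
  assume s: "0 \<le> s" "s \<le> 1"
  have "(1 - s)^y * s \<le> 1 * s" using s by (intro mult_right_mono) (auto simp: power_le_one)
  then show ?thesis unfolding Bf_def by (simp add: algebra_simps)
qed

lemma Bf_level:
  assumes "0 < \<mu>" "\<mu> \<le> 1" "y \<le> N"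
  shows "real y * (real N - real y) * (Bf (sqrt \<mu>) (y+1) + Bf (sqrt \<mu>) (y-1) - 2 * Bf (sqrt \<mu>) y)
         + real N * \<mu> * real y * (1 - real y / real N - Bf (sqrt \<mu>) y) \<le> 0"
proof (cases "y = 0")
  case True then show ?thesis by simp
next
  case False
  define s where "s = sqrt \<mu>"
  have s: "0 \<le> s" "s \<le> 1" "s * s = \<mu>" using assms unfolding s_def by auto
  define q where "q = 1 - s"
  have q: "0 \<le> q" "q \<le> 1" using s unfolding q_def by auto
  obtain z where z: "y = Suc z" using False by (cases y) auto
  define a where "a = q ^ z"
  have a: "0 \<le> a" "a \<le> 1" using q unfolding a_def by (auto simp: power_le_one)
  have N: "real N > 0" using assms False by auto
  have D: "Bf s (y+1) + Bf s (y-1) - 2 * Bf s y = - a * \<mu>"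
  proof -
    have "Bf s (y+1) + Bf s (y-1) - 2 * Bf s y = q^z * (2 * q - 1 - q * q)"
      unfolding Bf_def z q_def by (simp add: algebra_simps)
    also have "2 * q - 1 - q * q = - \<mu>" unfolding q_def s(3)[symmetric] by (simp add: algebra_simps)
    finally show ?thesis unfolding a_def by simp
  qed
  have By: "Bf s y = 1 - q * a" unfolding Bf_def z a_def q_def by simp
  have "real y * (real N - real y) * (- a * \<mu>) + real N * \<mu> * real y * (1 - real y / real N - (1 - q * a))
      = \<mu> * real y * (- (real N - real y) * a - real y + real N * q * a)"
    using N by (simp add: field_simps)
  also have "\<dots> \<le> \<mu> * real y * (- (real N - real y) * a - real y + real N * a)"
  proof -
    have "q * a \<le> 1 * a" using q a by (intro mult_right_mono) auto
    then have "real N * q * a \<le> real N * a" using N by (simp add: mult.assoc)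
    then show ?thesis using assms by (intro mult_left_mono) auto
  qed
  also have "\<dots> = \<mu> * real y * (real y * (a - 1))" by (simp add: algebra_simps)
  also have "\<dots> \<le> 0" using a assms by (simp add: mult_nonneg_nonpos)
  finally show ?thesis unfolding s_def[symmetric] D unfolding By .
qed


fun cc :: "real \<Rightarrow> nat \<Rightarrow> real" where
  "cc \<mu> 0 = sqrt \<mu>"
| "cc \<mu> (Suc i) = 4 * sqrt (\<mu> * cc \<mu> i)"

lemma cc_bound:
  assumes "0 < \<mu>" "\<mu> \<le> 1"
  shows "0 < cc \<mu> i \<and> cc \<mu> i \<le> 16 * \<mu> powr (1 - 1 / 2 ^ (i+1))"
proof (induction i)
  case 0
  then show ?case using assms powr_half_sqrt[of \<mu>] by (simp add: field_simps)
next
  case (Suc i)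
  define e :: real where "e = 1 - 1 / 2 ^ (i+1)"
  have pos: "0 < cc \<mu> (Suc i)" using Suc assms by simp
  have "cc \<mu> (Suc i) \<le> 4 * sqrt (\<mu> * (16 * \<mu> powr e))"
    using Suc assms unfolding e_def by (simp add: mult_left_mono)
  also have "\<mu> * (16 * \<mu> powr e) = 16 * \<mu> powr (1 + e)"
    using assms by (simp add: powr_add)
  also have "4 * sqrt (16 * \<mu> powr (1 + e)) = 16 * \<mu> powr ((1 + e) / 2)"
    using assms by (simp add: real_sqrt_mult powr_half_sqrt_powr)
  also have "(1 + e) / 2 = 1 - 1 / 2 ^ (Suc i + 1)"
    unfolding e_def by (simp add: field_simps)
  finally show ?case using pos by simp
qed

lemma cc_le16:
  assumes "0 < \<mu>" "\<mu> \<le> 1"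
  shows "cc \<mu> i \<le> 16"
proof -
  have "(1::real) \<le> 2^(i+1)" by (rule one_le_power) simp
  then have "0 \<le> 1 - 1 / (2::real) ^ (i+1)" by (simp add: field_simps)
  then have "\<mu> powr (1 - 1 / 2 ^ (i+1)) \<le> 1"
    using assms by (intro powr_le1) auto
  then show ?thesis using cc_bound[OF assms, of i] by linarith
qed

definition Al :: "nat \<Rightarrow> nat \<Rightarrow> real \<Rightarrow> nat \<Rightarrow> nat \<Rightarrow> real" where
  "Al m N \<mu> t y = (if t = m - 1 then Bf (sqrt \<mu>) y else fA N (\<mu> * cc \<mu> (m - 2 - t)) y)"

definition cl :: "nat \<Rightarrow> real \<Rightarrow> nat \<Rightarrow> real" where
  "cl m \<mu> t = cc \<mu> (m - 1 - t)"

definition good :: "nat \<Rightarrow> real \<Rightarrow> bool" where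
  "good N \<mu> \<longleftrightarrow> 2 \<le> N \<and> 0 < \<mu> \<and> \<mu> \<le> 1/64"

lemma good_d:
  assumes "good N \<mu>"
  shows "0 < \<mu> * cc \<mu> i" "\<mu> * cc \<mu> i \<le> 1/4"
proof -
  have m: "0 < \<mu>" "\<mu> \<le> 1" using assms by (auto simp: good_def)
  show "0 < \<mu> * cc \<mu> i" using cc_bound[OF m] m by simp
  have "\<mu> * cc \<mu> i \<le> \<mu> * 16" using cc_le16[OF m] m by (intro mult_left_mono) auto
  moreover have "\<mu> \<le> 1/64" using assms by (simp add: good_def)
  ultimately show "\<mu> * cc \<mu> i \<le> 1/4" by linarith
qed

lemma good_fA:
  assumes "good N \<mu>"
  shows "2 \<le> N" "0 < \<mu> * cc \<mu> i" "\<mu> * cc \<mu> i \<le> 1/4"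
  using good_d[OF assms] assms by (auto simp: good_def)

lemma Al_0[simp]: "Al m N \<mu> t 0 = 0" by (simp add: Al_def)

lemma Al_nonneg: "good N \<mu> \<Longrightarrow> 0 \<le> Al m N \<mu> t y"
  unfolding Al_def using fA_nonneg[OF good_fA] 
  by (auto intro!: Bf_nonneg simp: good_def)

lemma Al_inc:
  assumes "good N \<mu>" "1 \<le> t" "t \<le> m - 1"
  shows "Al m N \<mu> t (Suc y) \<le> Al m N \<mu> t y + cl m \<mu> t"
proof (cases "t = m - 1")
  case True
  then show ?thesis unfolding Al_def cl_def using Bf_inc[of "sqrt \<mu>" y] assms by (auto simp: good_def)
next
  case False
  then have e: "m - 1 - t = Suc (m - 2 - t)" using assms by auto
  show ?thesis unfolding Al_def cl_def e using False fA_inc[OF good_fA[OF assms(1)]] by simp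
qed

lemma Al_level_low:
  assumes "good N \<mu>" "1 \<le> t" "t < m - 1" "y < N" "Al m N \<mu> t y < 1"
  shows "real y * (real N - real y) * (Al m N \<mu> t (y+1) + Al m N \<mu> t (y-1) - 2 * Al m N \<mu> t y)
         + real N * \<mu> * real y * cl m \<mu> (t+1) \<le> 0"
proof -
  have e: "m - 1 - (t+1) = m - 2 - t" by simp
  show ?thesis using assms(5) unfolding Al_def cl_def e using assms(3)
    using fA_level[OF good_fA[OF assms(1)] assms(4) _ refl, of "m - 2 - t"] assms(1)
    by (auto simp: good_def)
qed

lemma Al_level_top:
  assumes "good N \<mu>" "y \<le> N" "t = m - 1"
  shows "real y * (real N - real y) * (Al m N \<mu> t (y+1) + Al m N \<mu> t (y-1) - 2 * Al m N \<mu> t y)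
         + real N * \<mu> * real y * (1 - real y / real N - Al m N \<mu> t y) \<le> 0"
  unfolding Al_def using assms Bf_level[of \<mu> y N] by (auto simp: good_def)

definition Sf :: "nat \<Rightarrow> nat \<Rightarrow> real \<Rightarrow> nat list \<Rightarrow> real" where
  "Sf m N \<mu> xs = (\<Sum>t\<in>{1..<m}. Al m N \<mu> t (cnt t xs))"

definition Vf :: "nat \<Rightarrow> nat \<Rightarrow> real \<Rightarrow> nat list \<Rightarrow> real" where
  "Vf m N \<mu> xs = (if cnt 1 xs = N then 0 else min 1 (Sf m N \<mu> xs))"

lemma Sf_nonneg: "good N \<mu> \<Longrightarrow> 0 \<le> Sf m N \<mu> xs"
  unfolding Sf_def by (intro sum_nonneg Al_nonneg)

lemma Vf_le_Sf: "good N \<mu> \<Longrightarrow> Vf m N \<mu> xs \<le> Sf m N \<mu> xs"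
  unfolding Vf_def using Sf_nonneg by auto


lemma cnt_mono: "1 \<le> t \<Longrightarrow> cnt t xs \<le> cnt 1 xs"
  unfolding cnt_def by (intro card_mono) auto

lemma Sf_mut:
  assumes "good N \<mu>" "i < length xs" "Suc (xs!i) < m"
  shows "Sf m N \<mu> (xs[i:=Suc (xs!i)]) \<le> Sf m N \<mu> xs + cl m \<mu> (Suc (xs!i))"
proof -
  have "Sf m N \<mu> (xs[i:=Suc (xs!i)]) = (\<Sum>t\<in>{1..<m}. Al m N \<mu> t (cnt t xs + (if t = Suc (xs!i) then 1 else 0)))"
    unfolding Sf_def using assms by (simp add: cnt_mut)
  also have "\<dots> \<le> (\<Sum>t\<in>{1..<m}. Al m N \<mu> t (cnt t xs) + (if t = Suc (xs!i) then cl m \<mu> t else 0))"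
    using Al_inc[OF assms(1)] by (intro sum_mono) auto
  also have "\<dots> = Sf m N \<mu> xs + cl m \<mu> (Suc (xs!i))"
    unfolding Sf_def sum.distrib using assms by simp
  finally show ?thesis .
qed

lemma death_Sf:
  assumes "length xs = N"
  shows "(\<Sum>i<N. \<Sum>j<N. Sf m N \<mu> (xs[i := xs!j])) =
    (\<Sum>t\<in>{1..<m}. (real N)^2 * Al m N \<mu> t (cnt t xs) + real (cnt t xs) * (real N - real (cnt t xs))
        * (Al m N \<mu> t (cnt t xs + 1) + Al m N \<mu> t (cnt t xs - 1) - 2 * Al m N \<mu> t (cnt t xs)))"
proof -
  have "(\<Sum>i<N. \<Sum>j<N. Sf m N \<mu> (xs[i := xs!j])) = (\<Sum>t\<in>{1..<m}. \<Sum>i<N. \<Sum>j<N. Al m N \<mu> t (cnt t (xs[i := xs!j])))"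
  proof -
    have "(\<Sum>i<N. \<Sum>j<N. Sf m N \<mu> (xs[i := xs!j])) = (\<Sum>i<N. \<Sum>t\<in>{1..<m}. \<Sum>j<N. Al m N \<mu> t (cnt t (xs[i := xs!j])))"
      unfolding Sf_def by (rule sum.cong[OF refl], rule sum.swap)
    also have "\<dots> = (\<Sum>t\<in>{1..<m}. \<Sum>i<N. \<Sum>j<N. Al m N \<mu> t (cnt t (xs[i := xs!j])))"
      by (rule sum.swap)
    finally show ?thesis .
  qed
  also have "\<dots> = (\<Sum>t\<in>{1..<m}. (real N)^2 * Al m N \<mu> t (cnt t xs) + real (cnt t xs) * (real N - real (cnt t xs))
        * (Al m N \<mu> t (cnt t xs + 1) + Al m N \<mu> t (cnt t xs - 1) - 2 * Al m N \<mu> t (cnt t xs)))"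
  proof (intro sum.cong refl)
    fix t
    have le: "cnt t xs \<le> N" using cnt_le[of t xs] assms by simp
    then have r: "real (N - cnt t xs) = real N - real (cnt t xs)" by simp
    show "(\<Sum>i<N. \<Sum>j<N. Al m N \<mu> t (cnt t (xs[i := xs!j]))) = (real N)^2 * Al m N \<mu> t (cnt t xs) + real (cnt t xs) * (real N - real (cnt t xs))
        * (Al m N \<mu> t (cnt t xs + 1) + Al m N \<mu> t (cnt t xs - 1) - 2 * Al m N \<mu> t (cnt t xs))"
      unfolding death_sum[OF assms] r by (simp add: power2_eq_square algebra_simps)
  qed
  finally show ?thesis .
qed

lemma final_alg:
  fixes N \<mu> k S T MS CS yp Bp :: real
  assumes "N > 0" "\<mu> > 0" "k > 0" "MS \<le> yp * (1 - k / N) + (k - yp) * S + CS"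
    "T \<le> - N * \<mu> * CS - N * \<mu> * yp * (1 - yp / N - Bp)" "yp \<le> k" "Bp \<le> S" "0 \<le> yp"
  shows "N / (N + \<mu> * k) * ((N^2 * S + T) / N^2) + (1 - N / (N + \<mu> * k)) * (MS / k) \<le> S"
proof -
  have pos: "N + \<mu> * k > 0" using assms by (simp add: add_pos_pos)
  have eq: "N / (N + \<mu> * k) * ((N^2 * S + T) / N^2) + (1 - N / (N + \<mu> * k)) * (MS / k)
      = (N * S + T / N + \<mu> * MS) / (N + \<mu> * k)"
  proof -
    have "1 - N / (N + \<mu> * k) = \<mu> * k / (N + \<mu> * k)" using pos by (simp add: field_simps)
    moreover have "N / (N + \<mu> * k) * ((N^2 * S + T) / N^2) = (N * S + T / N) / (N + \<mu> * k)"
    proof -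
      have "(N^2 * S + T) / N^2 = (N * S + T / N) / N" using assms(1) by (simp add: field_simps power2_eq_square)
      then show ?thesis using assms(1) by simp
    qed
    moreover have "\<mu> * k / (N + \<mu> * k) * (MS / k) = \<mu> * MS / (N + \<mu> * k)"
      using assms(3) pos by (simp add: field_simps)
    ultimately show ?thesis by (simp add: add_divide_distrib)
  qed
  have T': "T / N \<le> - \<mu> * CS - \<mu> * yp * (1 - yp / N - Bp)"
  proof -
    have "- N * \<mu> * CS - N * \<mu> * yp * (1 - yp / N - Bp) = N * (- \<mu> * CS - \<mu> * yp * (1 - yp / N - Bp))"
      by (simp add: algebra_simps)
    then have "T \<le> N * (- \<mu> * CS - \<mu> * yp * (1 - yp / N - Bp))" using assms(5) by simp
    then show ?thesis using assms(1) by (simp add: pos_divide_le_eq mult.commute)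
  qed
  have M': "\<mu> * MS \<le> \<mu> * (yp * (1 - k / N) + (k - yp) * S + CS)"
    using assms(4) assms(2) by (simp add: mult_left_mono)
  have key: "\<mu> * yp * ((1 - k / N) - S - (1 - yp / N - Bp)) \<le> 0"
  proof -
    have e: "(1 - k / N) - S - (1 - yp / N - Bp) = (yp - k) / N + (Bp - S)"
      by (simp add: diff_divide_distrib)
    have "(yp - k) / N \<le> 0" using assms(1,6) by (simp add: divide_nonpos_pos)
    then have "(1 - k / N) - S - (1 - yp / N - Bp) \<le> 0"
      unfolding e using assms(7) by linarith
    then show ?thesis using assms(2,8) by (simp add: mult_nonneg_nonpos)
  qed
  have "N * S + T / N + \<mu> * MS \<le> S * (N + \<mu> * k)"
    using T' M' key by (simp add: algebra_simps)
  then show ?thesis unfolding eq using pos by (simp add: divide_le_eq)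
qed


lemma cnt_full:
  assumes "cnt t xs = length xs" "i < length xs"
  shows "t \<le> xs ! i"
proof (rule ccontr)
  assume "\<not> t \<le> xs ! i"
  then have "{j. j < length xs \<and> t \<le> xs ! j} \<subseteq> {..<length xs} - {i}" by auto
  then have "cnt t xs \<le> card ({..<length xs} - {i})" unfolding cnt_def by (intro card_mono) auto
  also have "\<dots> < length xs" using assms(2) by simp
  finally show False using assms(1) by simp
qed

lemma cl_pos: "0 < \<mu> \<Longrightarrow> \<mu> \<le> 1 \<Longrightarrow> 0 < cl m \<mu> t"
  unfolding cl_def using cc_bound by blast

lemma card_top:
  assumes "2 \<le> m" "\<forall>x\<in>set xs. x < m"
  shows "card ({i. i < length xs \<and> 1 \<le> xs ! i} \<inter> {i. xs!i = m - 1}) = cnt (m-1) xs"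
proof -
  have lt: "\<And>i. i < length xs \<Longrightarrow> xs!i < m" using assms(2) by (auto simp: nth_mem)
  show ?thesis unfolding cnt_def using assms(1) lt
    by (intro arg_cong[where f=card]) (auto, fastforce+)
qed

lemma cl_sum_bound:
  assumes "2 \<le> m" "\<forall>x\<in>set xs. x < m" "0 < \<mu>" "\<mu> \<le> 1"
  shows "(\<Sum>i\<in>{i. i < length xs \<and> 1 \<le> xs ! i} \<inter> - {i. xs!i = m - 1}. cl m \<mu> (Suc (xs!i)))
    \<le> (\<Sum>t\<in>{1..<m-1}. real (cnt t xs) * cl m \<mu> (t+1))"
proof -
  let ?A = "{i. i < length xs \<and> 1 \<le> xs ! i} \<inter> - {i. xs!i = m - 1}"
  let ?g = "\<lambda>i t. if t \<le> xs!i then cl m \<mu> (t+1) else 0"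
  have "(\<Sum>i\<in>?A. cl m \<mu> (Suc (xs!i))) \<le> (\<Sum>i\<in>?A. \<Sum>t\<in>{1..<m-1}. ?g i t)"
  proof (intro sum_mono)
    fix i assume i: "i \<in> ?A"
    then have "xs ! i < m" using assms(2) by (auto simp: nth_mem)
    then have mem: "xs ! i \<in> {1..<m-1}" using i by auto
    have "cl m \<mu> (Suc (xs!i)) = ?g i (xs!i)" by simp
    also have "\<dots> \<le> (\<Sum>t\<in>{1..<m-1}. ?g i t)"
      by (rule member_le_sum[OF mem]) (auto intro: less_imp_le cl_pos assms)
    finally show "cl m \<mu> (Suc (xs!i)) \<le> (\<Sum>t\<in>{1..<m-1}. ?g i t)" .
  qed
  also have "\<dots> \<le> (\<Sum>i\<in>{..<length xs}. \<Sum>t\<in>{1..<m-1}. ?g i t)"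
  proof (rule sum_mono2)
    show "finite {..<length xs}" by simp
    show "?A \<subseteq> {..<length xs}" by auto
    fix i
    have "\<And>t. 0 \<le> ?g i t" using cl_pos[OF assms(3,4)] by (simp add: less_imp_le)
    then show "0 \<le> (\<Sum>t\<in>{1..<m-1}. ?g i t)" by (intro sum_nonneg) 
  qed
  also have "\<dots> = (\<Sum>t\<in>{1..<m-1}. \<Sum>i\<in>{..<length xs}. ?g i t)" by (rule sum.swap)
  also have "\<dots> = (\<Sum>t\<in>{1..<m-1}. real (cnt t xs) * cl m \<mu> (t+1))"
  proof (intro sum.cong refl)
    fix t
    have "(\<Sum>i\<in>{..<length xs}. ?g i t) = (\<Sum>i\<in>{i\<in>{..<length xs}. t \<le> xs!i}. cl m \<mu> (t+1))"
      by (rule sum.inter_filter[symmetric]) simp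
    also have "{i\<in>{..<length xs}. t \<le> xs!i} = {i. i < length xs \<and> t \<le> xs ! i}" by auto
    also have "(\<Sum>i\<in>{i. i < length xs \<and> t \<le> xs ! i}. cl m \<mu> (t+1)) = real (cnt t xs) * cl m \<mu> (t+1)"
      unfolding cnt_def by simp
    finally show "(\<Sum>i\<in>{..<length xs}. ?g i t) = real (cnt t xs) * cl m \<mu> (t+1)" .
  qed
  finally show ?thesis .
qed


lemma integral_le_1:
  fixes F :: "'a \<Rightarrow> real"
  assumes "\<And>x. \<bar>F x\<bar> \<le> 1"
  shows "integral\<^sup>L (measure_pmf M) F \<le> 1"
proof -
  have "integral\<^sup>L (measure_pmf M) F \<le> integral\<^sup>L (measure_pmf M) (\<lambda>_. 1)"
    apply (rule integral_mono)
    apply (rule measure_pmf.integrable_const_bound[where B=1])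
    using assms by (auto simp: abs_le_iff)
  then show ?thesis by simp
qed

lemma set_update_lt:
  assumes "\<forall>x\<in>set xs. x < m" "v < m"
  shows "\<forall>x\<in>set (xs[i:=v]). x < m"
  using assms set_update_subset_insert[of xs i v] by auto

lemma step_bound:
  fixes F :: "nat list \<Rightarrow> real"
  assumes good: "good N \<mu>" and m: "2 \<le> m" and len: "length xs = N" and lt: "\<forall>x\<in>set xs. x < m"
    and Fb: "\<And>ys. \<bar>F ys\<bar> \<le> 1"
    and Fext: "\<And>ys. length ys = N \<Longrightarrow> F ys \<le> 1 - real (cnt 1 ys) / real N"
    and FV: "\<And>ys. length ys = N \<Longrightarrow> \<forall>x\<in>set ys. x < m \<Longrightarrow> F ys \<le> Vf m N \<mu> ys"
  shows "integral\<^sup>L (sf_step N \<mu> xs) F \<le> Vf m N \<mu> xs"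
proof -
  have N2: "2 \<le> N" and mu: "0 < \<mu>" "\<mu> \<le> 1" using good by (auto simp: good_def)
  have N1: "1 \<le> N" using N2 by simp
  have Npos: "real N > 0" using N2 by simp
  define k where "k = cnt 1 xs"
  define nz where "nz = {i. i < length xs \<and> 1 \<le> xs ! i}"
  have knz: "card nz = k" unfolding k_def nz_def cnt_def ..
  have finnz: "finite nz" unfolding nz_def by simp
  define D where "D = (\<Sum>i<N. \<Sum>j<N. F (xs[i := xs ! j]))"
  define M where "M = (\<Sum>i\<in>nz. F (xs[i := Suc (xs ! i)]))"
  define p where "p = real N / (real N + \<mu> * real k)"
  have I: "integral\<^sup>L (sf_step N \<mu> xs) F = (if k = 0 then D / (real N)^2 else p * (D / (real N)^2) + (1 - p) * (M / real k))"
    unfolding D_def M_def p_def k_def nz_def using integral_step[OF N1 Fb mu(1)] by simp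
  have kN: "k \<le> N" unfolding k_def using cnt_le[of 1 xs] len by simp
  have p01: "0 \<le> p" "p \<le> 1" unfolding p_def using mu Npos by (auto simp: divide_le_eq_1)
  have dlen: "\<And>i j. length (xs[i := xs ! j]) = N" using len by simp
  have dlt: "\<And>i j. j < N \<Longrightarrow> \<forall>x\<in>set (xs[i := xs ! j]). x < m"
    using lt len by (intro set_update_lt) (auto simp: nth_mem)
  show ?thesis
  proof (cases "k = N")
    case True
    have full: "\<And>i. i < N \<Longrightarrow> 1 \<le> xs ! i" using True len unfolding k_def by (intro cnt_full) auto
    have D0: "D \<le> 0"
    proof -
      have "D \<le> (\<Sum>i<N. \<Sum>j<N. (0::real))"
        unfolding D_def
      proof (intro sum_mono)
        fix i j assume ij: "i \<in> {..<N}" "j \<in> {..<N}"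
        have "cnt 1 (xs[i := xs ! j]) = N" using cnt_update[of i xs 1 "xs!j"] full ij True len
          unfolding k_def by auto
        then show "F (xs[i := xs ! j]) \<le> 0" using Fext[OF dlen, of i j] Npos by simp
      qed
      then show ?thesis by simp
    qed
    have M0: "M \<le> 0"
    proof -
      have "M \<le> (\<Sum>i\<in>nz. (0::real))"
        unfolding M_def
      proof (intro sum_mono)
        fix i assume i: "i \<in> nz"
        then have "cnt 1 (xs[i := Suc (xs ! i)]) = N" using cnt_mut[of i xs 1] True unfolding k_def nz_def by auto
        then show "F (xs[i := Suc (xs ! i)]) \<le> 0" using Fext[of "xs[i := Suc (xs ! i)]"] len Npos by simp
      qed
      then show ?thesis by simp
    qed
    have "D / (real N)^2 \<le> 0" using D0 Npos by (simp add: divide_nonpos_pos)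
    then have "p * (D / (real N)^2) \<le> 0" using p01 by (intro mult_nonneg_nonpos) auto
    moreover have "M / real k \<le> 0" using M0 by (simp add: divide_nonpos_nonneg)
    then have "(1 - p) * (M / real k) \<le> 0" using p01 by (intro mult_nonneg_nonpos) auto
    ultimately show ?thesis unfolding I Vf_def k_def[symmetric] using True N2 by auto
  next
    case False
    then have kltN: "k < N" using kN by simp
    show ?thesis
    proof (cases "1 \<le> Sf m N \<mu> xs")
      case True
      then have "Vf m N \<mu> xs = 1" unfolding Vf_def k_def[symmetric] using False by simp
      then show ?thesis using integral_le_1[OF Fb] by simp
    next
      case Sl: False
      then have VS: "Vf m N \<mu> xs = Sf m N \<mu> xs" unfolding Vf_def k_def[symmetric] using False by simp
      define y where "y = (\<lambda>t. cnt t xs)"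
      define A where "A = (\<lambda>t. Al m N \<mu> t)"
      define S where "S = Sf m N \<mu> xs"
      define Tt where "Tt = (\<lambda>t. real (y t) * (real N - real (y t)) * (A t (y t + 1) + A t (y t - 1) - 2 * A t (y t)))"
      define CS where "CS = (\<Sum>t\<in>{1..<m-1}. real (y t) * cl m \<mu> (t+1))"
      define yp where "yp = y (m - 1)"
      have Sdef: "S = (\<Sum>t\<in>{1..<m}. A t (y t))" unfolding S_def Sf_def A_def y_def ..
      have Anonneg: "\<And>t z. 0 \<le> A t z" unfolding A_def using Al_nonneg[OF good] by blast
      have Ale: "\<And>t. t \<in> {1..<m} \<Longrightarrow> A t (y t) \<le> S"
        unfolding Sdef by (rule member_le_sum) (auto intro: Anonneg)
      have ylt: "\<And>t. 1 \<le> t \<Longrightarrow> y t \<le> k" unfolding y_def k_def by (rule cnt_mono)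
      have Dle: "D \<le> (real N)^2 * S + (\<Sum>t\<in>{1..<m}. Tt t)"
      proof -
        have "D \<le> (\<Sum>i<N. \<Sum>j<N. Sf m N \<mu> (xs[i := xs ! j]))"
          unfolding D_def
        proof (intro sum_mono)
          fix i j assume "i \<in> {..<N}" "j \<in> {..<N}"
          then show "F (xs[i := xs ! j]) \<le> Sf m N \<mu> (xs[i := xs ! j])"
            using FV[OF dlen dlt] Vf_le_Sf[OF good] by (meson lessThan_iff order_trans)
        qed
        also have "\<dots> = (\<Sum>t\<in>{1..<m}. (real N)^2 * A t (y t) + Tt t)"
          unfolding death_Sf[OF len] Tt_def A_def y_def ..
        also have "\<dots> = (real N)^2 * S + (\<Sum>t\<in>{1..<m}. Tt t)"
          unfolding Sdef by (simp add: sum.distrib sum_distrib_left)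
        finally show ?thesis .
      qed
      have Tle: "(\<Sum>t\<in>{1..<m}. Tt t) \<le> - real N * \<mu> * CS - real N * \<mu> * real yp * (1 - real yp / real N - A (m-1) yp)"
      proof -
        have split: "{1..<m} = {1..<m-1} \<union> {m-1}" using m by auto
        have "(\<Sum>t\<in>{1..<m}. Tt t) = (\<Sum>t\<in>{1..<m-1}. Tt t) + Tt (m-1)"
          unfolding split by (subst sum.union_disjoint) auto
        also have "(\<Sum>t\<in>{1..<m-1}. Tt t) \<le> (\<Sum>t\<in>{1..<m-1}. - (real N * \<mu> * real (y t) * cl m \<mu> (t+1)))"
        proof (intro sum_mono)
          fix t assume t: "t \<in> {1..<m-1}"
          have "t \<in> {1..<m}" using t by auto
          then have "A t (y t) \<le> S" by (rule Ale)
          then have "A t (y t) < 1" using Sl unfolding S_def by linarith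
          moreover have "y t < N" using ylt[of t] t kltN by auto
          ultimately show "Tt t \<le> - (real N * \<mu> * real (y t) * cl m \<mu> (t+1))"
            using Al_level_low[OF good, where t=t and m=m and y="y t"] t unfolding Tt_def A_def by auto
        qed
        also have "(\<Sum>t\<in>{1..<m-1}. - (real N * \<mu> * real (y t) * cl m \<mu> (t+1))) = - real N * \<mu> * CS"
          unfolding CS_def by (simp add: sum_negf sum_distrib_left mult.assoc)
        also have "Tt (m-1) \<le> - real N * \<mu> * real yp * (1 - real yp / real N - A (m-1) yp)"
        proof -
          have "yp \<le> N" unfolding yp_def y_def using cnt_le[of "m-1" xs] len by simp
          then show ?thesis using Al_level_top[OF good, where y=yp and t="m-1" and m=m] unfolding Tt_def A_def yp_def by simp
        qed
        finally show ?thesis by simp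
      qed
      have CSnn: "0 \<le> CS" unfolding CS_def using cl_pos[OF mu] by (intro sum_nonneg) (simp add: less_imp_le)
      have ypk: "yp \<le> k" unfolding yp_def using ylt m by simp
      have Bp: "A (m-1) yp \<le> S" unfolding yp_def using Ale m by simp
      show ?thesis
      proof (cases "k = 0")
        case True
        then have "yp = 0" using ypk by simp
        have "0 \<le> real N * \<mu> * CS" using CSnn mu Npos by simp
        then have "(\<Sum>t\<in>{1..<m}. Tt t) \<le> 0" using Tle \<open>yp = 0\<close> by simp
        then have "D \<le> S * (real N)^2" using Dle by (simp add: mult.commute)
        then have "D / (real N)^2 \<le> S" using Npos by (simp add: divide_le_eq)
        then show ?thesis unfolding I VS S_def[symmetric] using True by simp
      next
        case knz0: False
        have Mle: "M \<le> real yp * (1 - real k / real N) + (real k - real yp) * S + CS"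
        proof -
          let ?P = "{i. xs!i = m - 1}"
          have "M \<le> (\<Sum>i\<in>nz. if xs!i = m - 1 then 1 - real k / real N else S + cl m \<mu> (Suc (xs!i)))"
            unfolding M_def
          proof (intro sum_mono)
            fix i assume i: "i \<in> nz"
            have il: "i < length xs" "1 \<le> xs!i" using i unfolding nz_def by auto
            have nlen: "length (xs[i := Suc (xs ! i)]) = N" using len by simp
            show "F (xs[i := Suc (xs ! i)]) \<le> (if xs!i = m - 1 then 1 - real k / real N else S + cl m \<mu> (Suc (xs!i)))"
            proof (cases "xs!i = m - 1")
              case True
              have "cnt 1 (xs[i := Suc (xs ! i)]) = k" using il m True cnt_mut[of i xs 1] unfolding k_def by auto
              then show ?thesis using Fext[OF nlen] True by simp
            next
              case False
              have "xs!i < m" using lt il by (auto simp: nth_mem)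
              then have sl: "Suc (xs!i) < m" using False by simp
              have "F (xs[i := Suc (xs ! i)]) \<le> Sf m N \<mu> (xs[i := Suc (xs ! i)])"
                using FV[OF nlen set_update_lt[OF lt sl]] Vf_le_Sf[OF good] by (meson order_trans)
              also have "\<dots> \<le> S + cl m \<mu> (Suc (xs!i))" unfolding S_def by (rule Sf_mut[OF good il(1) sl])
              finally show ?thesis using False by simp
            qed
          qed
          also have "\<dots> = (\<Sum>i\<in>nz \<inter> ?P. 1 - real k / real N) + (\<Sum>i\<in>nz \<inter> - ?P. S + cl m \<mu> (Suc (xs!i)))"
            by (rule sum.If_cases[OF finnz])
          also have "(\<Sum>i\<in>nz \<inter> ?P. 1 - real k / real N) = real yp * (1 - real k / real N)"
            using card_top[OF m lt] unfolding nz_def yp_def y_def by simp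
          also have "(\<Sum>i\<in>nz \<inter> - ?P. S + cl m \<mu> (Suc (xs!i))) = real (card (nz \<inter> - ?P)) * S + (\<Sum>i\<in>nz \<inter> - ?P. cl m \<mu> (Suc (xs!i)))"
            by (simp add: sum.distrib)
          also have "card (nz \<inter> - ?P) = k - yp"
          proof -
            have "card (nz \<inter> ?P) + card (nz \<inter> - ?P) = card nz"
              using finnz by (subst card_Un_disjoint[symmetric]) (auto intro: arg_cong[where f=card])
            moreover have "card (nz \<inter> ?P) = yp" using card_top[OF m lt] unfolding nz_def yp_def y_def by simp
            ultimately show ?thesis using knz by simp
          qed
          also have "(\<Sum>i\<in>nz \<inter> - ?P. cl m \<mu> (Suc (xs!i))) \<le> CS"
            using cl_sum_bound[OF m lt mu] unfolding nz_def CS_def y_def by simp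
          finally show ?thesis using ypk by (simp add: of_nat_diff)
        qed
        have "p * ((real N ^ 2 * S + (\<Sum>t\<in>{1..<m}. Tt t)) / (real N)^2) + (1 - p) * (M / real k) \<le> S"
          unfolding p_def
          by (rule final_alg[OF Npos mu(1) _ Mle Tle _ Bp]) (use knz0 ypk in auto)
        moreover have "p * (D / (real N)^2) \<le> p * ((real N ^ 2 * S + (\<Sum>t\<in>{1..<m}. Tt t)) / (real N)^2)"
          using Dle p01 Npos by (intro mult_left_mono divide_right_mono) auto
        ultimately show ?thesis unfolding I VS S_def[symmetric] using knz0 by simp
      qed
    qed
  qed
qed


lemma integral_step_mono:
  fixes F G :: "nat list \<Rightarrow> real"
  assumes N1: "1 \<le> N" and mu: "0 < \<mu>" and len: "length xs = N"
    and FB: "\<And>x. \<bar>F x\<bar> \<le> Ba" and GB: "\<And>x. \<bar>G x\<bar> \<le> Bb"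
    and FG: "\<And>ys. length ys = N \<Longrightarrow> F ys \<le> G ys"
  shows "integral\<^sup>L (sf_step N \<mu> xs) F \<le> integral\<^sup>L (sf_step N \<mu> xs) G"
proof -
  define p where "p = real N / (real N + \<mu> * real (cnt 1 xs))"
  have p01: "0 \<le> p" "p \<le> 1" unfolding p_def using mu N1 by (auto simp: divide_le_eq_1)
  have D: "(\<Sum>i<N. \<Sum>j<N. F (xs[i := xs ! j])) \<le> (\<Sum>i<N. \<Sum>j<N. G (xs[i := xs ! j]))"
    by (intro sum_mono FG) (simp add: len)
  have M: "(\<Sum>i\<in>{i. i < length xs \<and> 1 \<le> xs ! i}. F (xs[i := Suc (xs ! i)]))
         \<le> (\<Sum>i\<in>{i. i < length xs \<and> 1 \<le> xs ! i}. G (xs[i := Suc (xs ! i)]))"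
    by (intro sum_mono FG) (simp add: len)
  have D': "(\<Sum>i<N. \<Sum>j<N. F (xs[i := xs ! j])) / (real N)^2 \<le> (\<Sum>i<N. \<Sum>j<N. G (xs[i := xs ! j])) / (real N)^2"
    using D by (intro divide_right_mono) auto
  have M': "(\<Sum>i\<in>{i. i < length xs \<and> 1 \<le> xs ! i}. F (xs[i := Suc (xs ! i)])) / real (cnt 1 xs)
         \<le> (\<Sum>i\<in>{i. i < length xs \<and> 1 \<le> xs ! i}. G (xs[i := Suc (xs ! i)])) / real (cnt 1 xs)"
    using M by (intro divide_right_mono) auto
  have X: "p * ((\<Sum>i<N. \<Sum>j<N. F (xs[i := xs ! j])) / (real N)^2) + (1 - p) * ((\<Sum>i\<in>{i. i < length xs \<and> 1 \<le> xs ! i}. F (xs[i := Suc (xs ! i)])) / real (cnt 1 xs))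
     \<le> p * ((\<Sum>i<N. \<Sum>j<N. G (xs[i := xs ! j])) / (real N)^2) + (1 - p) * ((\<Sum>i\<in>{i. i < length xs \<and> 1 \<le> xs ! i}. G (xs[i := Suc (xs ! i)])) / real (cnt 1 xs))"
    using D' M' p01 by (intro add_mono mult_left_mono) auto
  show ?thesis
  proof (cases "cnt 1 xs = 0")
    case True
    then show ?thesis unfolding integral_step[OF N1 FB mu] integral_step[OF N1 GB mu] using D' by simp
  next
    case False
    then show ?thesis unfolding integral_step[OF N1 FB mu] integral_step[OF N1 GB mu] p_def[symmetric]
      using X by simp
  qed
qed

definition Zs :: "nat list list set" where
  "Zs = {ps. \<forall>t\<in>set (last ps). t = 0}"

lemma death_cnt_sum:
  assumes "length xs = N"
  shows "(\<Sum>i<N. \<Sum>j<N. real (cnt 1 (xs[i := xs!j]))) = (real N)^2 * real (cnt 1 xs)"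
proof -
  define y where "y = cnt 1 xs"
  have yN: "y \<le> N" unfolding y_def using cnt_le[of 1 xs] assms by simp
  have "(\<Sum>i<N. \<Sum>j<N. real (cnt 1 (xs[i := xs!j]))) =
     (real y^2 + real (N - y)^2) * real y + real y * real (N - y) * (real (y - 1) + real (y + 1))"
    unfolding y_def by (rule death_sum[OF assms])
  also have "\<dots> = (real N)^2 * real y"
  proof (cases "y = 0")
    case True then show ?thesis by simp
  next
    case False
    then have "real (y - 1) = real y - 1" by simp
    moreover have "real (N - y) = real N - real y" using yN by simp
    ultimately show ?thesis by (simp add: power2_eq_square algebra_simps)
  qed
  finally show ?thesis unfolding y_def .
qed

lemma ext_step:
  assumes N1: "1 \<le> N" and mu: "0 < \<mu>" and len: "length xs = N"
  defines "G \<equiv> (\<lambda>ys. max 0 (1 - real (cnt 1 ys) / real N))"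
  shows "integral\<^sup>L (sf_step N \<mu> xs) G \<le> G xs"
proof -
  have GB: "\<And>x. \<bar>G x\<bar> \<le> 1" unfolding G_def by (auto simp: abs_le_iff)
  have Geq: "\<And>ys. length ys = N \<Longrightarrow> G ys = 1 - real (cnt 1 ys) / real N"
  proof -
    fix ys :: "nat list" assume "length ys = N"
    then have "real (cnt 1 ys) \<le> real N" using cnt_le[of 1 ys] by simp
    then show "G ys = 1 - real (cnt 1 ys) / real N" unfolding G_def using N1 by (simp add: divide_le_eq_1)
  qed
  define y where "y = cnt 1 xs"
  have Npos: "real N > 0" using N1 by simp
  have D: "(\<Sum>i<N. \<Sum>j<N. G (xs[i := xs ! j])) / (real N)^2 = G xs"
  proof -
    have "(\<Sum>i<N. \<Sum>j<N. G (xs[i := xs ! j])) = (\<Sum>i<N. \<Sum>j<N. 1 - real (cnt 1 (xs[i := xs!j])) / real N)"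
      using len by (intro sum.cong refl) (simp add: Geq)
    also have "\<dots> = (real N)^2 - (\<Sum>i<N. \<Sum>j<N. real (cnt 1 (xs[i := xs!j]))) / real N"
      by (simp add: sum_subtractf sum_divide_distrib power2_eq_square)
    also have "\<dots> = (real N)^2 - (real N)^2 * real y / real N" unfolding death_cnt_sum[OF len] y_def ..
    finally show ?thesis unfolding Geq[OF len] y_def[symmetric] using Npos by (simp add: field_simps power2_eq_square)
  qed
  have M: "cnt 1 xs \<noteq> 0 \<Longrightarrow> (\<Sum>i\<in>{i. i < length xs \<and> 1 \<le> xs ! i}. G (xs[i := Suc (xs ! i)])) / real (cnt 1 xs) = G xs"
  proof -
    assume k: "cnt 1 xs \<noteq> 0"
    have "(\<Sum>i\<in>{i. i < length xs \<and> 1 \<le> xs ! i}. G (xs[i := Suc (xs ! i)])) = (\<Sum>i\<in>{i. i < length xs \<and> 1 \<le> xs ! i}. G xs)"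
    proof (intro sum.cong refl)
      fix i assume "i \<in> {i. i < length xs \<and> 1 \<le> xs ! i}"
      then have "cnt 1 (xs[i := Suc (xs ! i)]) = cnt 1 xs" using cnt_mut[of i xs 1] by auto
      then show "G (xs[i := Suc (xs ! i)]) = G xs" unfolding G_def by simp
    qed
    also have "\<dots> = real (cnt 1 xs) * G xs" unfolding cnt_def by simp
    finally show ?thesis using k by simp
  qed
  show ?thesis unfolding integral_step[OF N1 GB mu] using D M by (simp add: algebra_simps)
qed

lemma path_nonempty_meas:
  "measure (sf_path N \<mu> n ys) (Cons xs -` Zs) = measure (sf_path N \<mu> n ys) Zs"
proof -
  have "Cons xs -` Zs \<inter> set_pmf (sf_path N \<mu> n ys) = Zs \<inter> set_pmf (sf_path N \<mu> n ys)"
    using path_nonempty[of N \<mu> n ys] unfolding Zs_def by auto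
  then show ?thesis by (metis measure_Int_set_pmf)
qed

lemma ext_bound:
  assumes N1: "1 \<le> N" and mu: "0 < \<mu>"
  shows "length ys = N \<Longrightarrow> measure (sf_path N \<mu> n ys) Zs \<le> 1 - real (cnt 1 ys) / real N"
proof (induction n arbitrary: ys)
  case 0
  show ?case
  proof (cases "[ys] \<in> Zs")
    case True
    then have "\<forall>t\<in>set ys. t = 0" unfolding Zs_def by simp
    then have "{i. i < length ys \<and> 1 \<le> ys ! i} = {}" using nth_mem by fastforce
    then have "cnt 1 ys = 0" unfolding cnt_def by simp
    then show ?thesis by simp
  next
    case False
    then have "measure (sf_path N \<mu> 0 ys) Zs = 0" by simp
    moreover have "real (cnt 1 ys) \<le> real N" using cnt_le[of 1 ys] 0 by simp
    ultimately show ?thesis using N1 by (simp add: divide_le_eq_1)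
  qed
next
  case (Suc n)
  define G where "G = (\<lambda>ys. max 0 (1 - real (cnt 1 ys) / real N))"
  have "measure (sf_path N \<mu> (Suc n) ys) Zs = integral\<^sup>L (sf_step N \<mu> ys) (\<lambda>zs. measure (sf_path N \<mu> n zs) Zs)"
    unfolding path_Suc_measure path_nonempty_meas ..
  also have "\<dots> \<le> integral\<^sup>L (sf_step N \<mu> ys) G"
  proof (rule integral_step_mono[where Ba=1 and Bb=1, OF N1 mu Suc.prems])
    show "\<And>x. \<bar>measure (sf_path N \<mu> n x) Zs\<bar> \<le> 1" by simp
    show "\<And>x. \<bar>G x\<bar> \<le> 1" unfolding G_def by (auto simp: abs_le_iff)
    fix zs :: "nat list" assume "length zs = N"
    then show "measure (sf_path N \<mu> n zs) Zs \<le> G zs" using Suc.IH unfolding G_def by fastforce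
  qed
  also have "\<dots> \<le> G ys" unfolding G_def by (rule ext_step[OF N1 mu Suc.prems])
  also have "G ys = 1 - real (cnt 1 ys) / real N"
    using cnt_le[of 1 ys] Suc.prems N1 unfolding G_def by (simp add: divide_le_eq_1)
  finally show ?case .
qed


lemma event_sub_Zs: "sf_event m \<subseteq> Zs"
  unfolding sf_event_def Zs_def by auto

lemma Vf_nonneg: "good N \<mu> \<Longrightarrow> 0 \<le> Vf m N \<mu> xs"
  unfolding Vf_def using Sf_nonneg by auto

lemma main_bound:
  assumes good: "good N \<mu>" and m: "2 \<le> m"
  shows "length xs = N \<Longrightarrow> \<forall>x\<in>set xs. x < m \<Longrightarrow> measure (sf_path N \<mu> n xs) (sf_event m) \<le> Vf m N \<mu> xs"
proof (induction n arbitrary: xs)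
  case 0
  have "[xs] \<notin> sf_event m" using 0 unfolding sf_event_def by auto
  then show ?case using Vf_nonneg[OF good] by simp
next
  case (Suc n)
  have N1: "1 \<le> N" and mu: "0 < \<mu>" using good by (auto simp: good_def)
  have pre: "Cons xs -` sf_event m = sf_event m"
  proof -
    have "m \<notin> set xs" using Suc.prems by auto
    then show ?thesis unfolding sf_event_def by (auto split: list.splits)
  qed
  have "measure (sf_path N \<mu> (Suc n) xs) (sf_event m) = integral\<^sup>L (sf_step N \<mu> xs) (\<lambda>zs. measure (sf_path N \<mu> n zs) (sf_event m))"
    unfolding path_Suc_measure pre ..
  also have "\<dots> \<le> Vf m N \<mu> xs"
  proof (rule step_bound[OF good m Suc.prems])
    show "\<And>ys. \<bar>measure (sf_path N \<mu> n ys) (sf_event m)\<bar> \<le> 1" by simp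
    fix ys :: "nat list" assume ys: "length ys = N"
    have "measure (sf_path N \<mu> n ys) (sf_event m) \<le> measure (sf_path N \<mu> n ys) Zs"
      using event_sub_Zs by (intro measure_pmf.finite_measure_mono) auto
    also have "\<dots> \<le> 1 - real (cnt 1 ys) / real N" by (rule ext_bound[OF N1 mu ys])
    finally show "measure (sf_path N \<mu> n ys) (sf_event m) \<le> 1 - real (cnt 1 ys) / real N" .
  next
    fix ys :: "nat list" assume "length ys = N" "\<forall>x\<in>set ys. x < m"
    then show "measure (sf_path N \<mu> n ys) (sf_event m) \<le> Vf m N \<mu> ys" by (rule Suc.IH)
  qed
  finally show ?case .
qed

lemma init_props:
  assumes "1 \<le> N"
  shows "length (sf_init N) = N" "cnt 1 (sf_init N) = 1" "\<And>t. 2 \<le> t \<Longrightarrow> cnt t (sf_init N) = 0"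
proof -
  show L: "length (sf_init N) = N" using assms by (simp add: sf_init_def)
  have nth: "\<And>i. i < N \<Longrightarrow> sf_init N ! i = (if i = 0 then 1 else 0)"
  proof -
    fix i assume "i < N"
    then show "sf_init N ! i = (if i = 0 then 1 else 0)" by (cases i) (auto simp: sf_init_def)
  qed
  have "{i. i < length (sf_init N) \<and> 1 \<le> sf_init N ! i} = {0}"
    using assms by (auto simp: L nth split: if_splits)
  then show "cnt 1 (sf_init N) = 1" unfolding cnt_def by simp
  fix t :: nat assume t: "2 \<le> t"
  have "{i. i < length (sf_init N) \<and> t \<le> sf_init N ! i} = {}"
    using assms t by (auto simp: L nth)
  then show "cnt t (sf_init N) = 0" unfolding cnt_def by simp
qed

lemma q_bound:
  assumes good: "good N \<mu>" and m: "2 \<le> m"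
  shows "0 \<le> q_prime m N \<mu> \<and> q_prime m N \<mu> \<le> 16 * \<mu> powr (1 - 1 / 2 ^ (m - 1))"
proof -
  have N1: "1 \<le> N" and mu: "0 < \<mu>" "\<mu> \<le> 1" using good by (auto simp: good_def)
  note ip = init_props[OF N1]
  have lt: "\<forall>x\<in>set (sf_init N). x < m" using m by (auto simp: sf_init_def)
  have Pb: "\<And>n. measure (sf_path N \<mu> n (sf_init N)) (sf_event m) \<le> Vf m N \<mu> (sf_init N)"
    using main_bound[OF good m ip(1) lt] .
  have "Vf m N \<mu> (sf_init N) \<le> Sf m N \<mu> (sf_init N)" by (rule Vf_le_Sf[OF good])
  also have "Sf m N \<mu> (sf_init N) = (\<Sum>t\<in>{1..<m}. if t = 1 then Al m N \<mu> 1 1 else 0)"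
    unfolding Sf_def by (intro sum.cong refl) (use ip(2) ip(3) in auto)
  also have "\<dots> = Al m N \<mu> 1 1" using m by simp
  also have "\<dots> \<le> Al m N \<mu> 1 0 + cl m \<mu> 1" using Al_inc[OF good, of 1 m 0] m by simp
  also have "\<dots> = cc \<mu> (m - 2)" unfolding cl_def by (simp add: numeral_2_eq_2)
  also have "\<dots> \<le> 16 * \<mu> powr (1 - 1 / 2 ^ (m - 1))"
    using cc_bound[OF mu, of "m-2"] m by (simp add: Suc_diff_Suc numeral_2_eq_2)
  finally have V: "Vf m N \<mu> (sf_init N) \<le> 16 * \<mu> powr (1 - 1 / 2 ^ (m - 1))" .
  have bdd: "bdd_above (range (\<lambda>n. measure (sf_path N \<mu> n (sf_init N)) (sf_event m)))"
    using Pb by (intro bdd_aboveI2) 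
  have "q_prime m N \<mu> \<le> 16 * \<mu> powr (1 - 1 / 2 ^ (m - 1))"
    unfolding q_prime_def using Pb V by (intro cSUP_least) (auto intro: order_trans)
  moreover have "0 \<le> q_prime m N \<mu>"
  proof -
    have "measure (sf_path N \<mu> 0 (sf_init N)) (sf_event m) \<le> q_prime m N \<mu>"
      unfolding q_prime_def by (rule cSUP_upper[OF _ bdd]) simp
    then show ?thesis by (meson measure_nonneg order_trans)
  qed
  ultimately show ?thesis by simp
qed


theorem mainTheorem5:
  fixes m :: nat and \<mu> :: "nat \<Rightarrow> real"
  assumes "m \<ge> 2"
    and "\<And>N. \<mu> N > 0"
    and "(\<lambda>N. real N * \<mu> N powr (1 - 1 / 2 ^ (m - 1))) \<longlonglongrightarrow> 0"
  shows "(\<lambda>N. real N * q_prime m N (\<mu> N)) \<longlonglongrightarrow> 0"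
proof -
  define e :: real where "e = 1 - 1 / 2 ^ (m - 1)"
  have "(2::real) \<le> 2 ^ (m - 1)"
  proof -
    have "(2::real)^1 \<le> 2 ^ (m - 1)" using assms(1) by (intro power_increasing) auto
    then show ?thesis by simp
  qed
  then have epos: "0 < e" unfolding e_def by (simp add: field_simps)
  define c :: real where "c = (1/64) powr e"
  have cpos: "0 < c" unfolding c_def by simp
  have ev1: "eventually (\<lambda>N. real N * \<mu> N powr e < c) sequentially"
    using order_tendstoD(2)[OF assms(3) cpos] unfolding e_def .
  have ev2: "eventually (\<lambda>N::nat. 2 \<le> N) sequentially" by (rule eventually_ge_at_top)
  have evg: "eventually (\<lambda>N. good N (\<mu> N)) sequentially"
    using ev1 ev2
  proof eventually_elim
    case (elim N)
    have "\<mu> N \<le> 1/64"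
    proof (rule ccontr)
      assume "\<not> \<mu> N \<le> 1/64"
      then have "(1/64) powr e < \<mu> N powr e" using epos by (intro powr_less_mono2) auto
      also have "\<mu> N powr e \<le> real N * \<mu> N powr e"
        using elim(2) by (intro mult_le_cancel_right1[THEN iffD2]) auto
      finally show False using elim(1) unfolding c_def by simp
    qed
    then show ?case using elim(2) assms(2) by (simp add: good_def)
  qed
  have lo: "eventually (\<lambda>N. 0 \<le> real N * q_prime m N (\<mu> N)) sequentially"
    using evg by eventually_elim (use q_bound assms(1) in auto)
  have hi: "eventually (\<lambda>N. real N * q_prime m N (\<mu> N) \<le> 16 * (real N * \<mu> N powr (1 - 1 / 2 ^ (m - 1)))) sequentially"
    using evg
  proof eventually_elim
    case (elim N)
    have "q_prime m N (\<mu> N) \<le> 16 * \<mu> N powr (1 - 1 / 2 ^ (m - 1))" using q_bound[OF elim assms(1)] by simp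
    then have "real N * q_prime m N (\<mu> N) \<le> real N * (16 * \<mu> N powr (1 - 1 / 2 ^ (m - 1)))"
      by (intro mult_left_mono) auto
    then show ?case by (simp add: algebra_simps)
  qed
  have "(\<lambda>N. 16 * (real N * \<mu> N powr (1 - 1 / 2 ^ (m - 1)))) \<longlonglongrightarrow> 16 * 0"
    by (intro tendsto_mult tendsto_const assms(3))
  then have h0: "(\<lambda>N. 16 * (real N * \<mu> N powr (1 - 1 / 2 ^ (m - 1)))) \<longlonglongrightarrow> 0" by simp
  show ?thesis by (rule tendsto_sandwich[OF lo hi tendsto_const h0])
qed


end
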